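(* Let $\mu>0$, $\ell_S>0$, let $\Delta$ be a positive integer, and set $a_S=\ell_S/\mu$, \[ \rho_S=\sqrt{1-\frac{2}{\sqrt{1+\Delta a_S}+1}},\qquad \lambda_S=\begin{cases}\frac{\Delta a_S}{3+3\Delta a_S}&\text{if }\Delta a_S<48,\\[2pt]\max\Big(\frac{\Delta a_S}{3+3\Delta a_S},\ \big(1-4\sqrt3(\Delta a_S)^{-1/2}\big)^2\Big)&\text{otherwise.}\end{cases} \] Then $\rho_S^{32}\le\lambda_S$. *)

theory Defs
  imports Complex_Main
begin

end

theory Submission
  imports Defs
begin

lemma bern8: fixes u :: real assumes "0 \<le> u" "u \<le> 1"
  shows "(1 - u)^8 * (1 + 8*u) \<le> 1"
proof -
  have a: "1 + 8*u \<le> (1+u)^8" using Bernoulli_inequality[of u 8] assms by simp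
  have "(1 - u)^8 * (1 + 8*u) \<le> (1-u)^8 * (1+u)^8"
    using a assms by (intro mult_left_mono) auto
  also have "\<dots> = (1 - u*u)^8" by (simp add: power_mult_distrib[symmetric] algebra_simps)
  also have "\<dots> \<le> 1" using assms by (intro power_le_one) (auto simp: mult_le_one)
  finally show ?thesis .
qed

theorem lemmaG2:
  fixes mu lS :: real and Delta :: nat
  assumes "mu > 0" and "lS > 0" and "Delta \<ge> 1"
  shows "let aS = lS / mu;
             x = real Delta * aS;
             rhoS = sqrt (1 - 2 / (sqrt (1 + x) + 1));
             lambdaS = (if x < 48 then x / (3 + 3 * x)
                        else max (x / (3 + 3 * x)) ((1 - 4 * sqrt 3 * x powr (-1/2)) ^ 2))
         in rhoS ^ 32 \<le> lambdaS"
proof -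
  define x where "x = real Delta * (lS / mu)"
  have xpos: "x > 0" using assms unfolding x_def by auto
  define s where "s = sqrt (1 + x)"
  have s1: "s > 1" unfolding s_def using xpos by simp
  have s2: "s^2 = 1 + x" unfolding s_def using xpos by simp
  define t where "t = (s - 1) / (s + 1)"
  have teq: "1 - 2 / (s + 1) = t" unfolding t_def using s1 by (simp add: field_simps)
  have t0: "0 \<le> t" unfolding t_def using s1 by simp
  have t1: "t \<le> 1" unfolding t_def using s1 by simp
  have rho: "sqrt t ^ 32 = t ^ 16"
  proof -
    have "sqrt t ^ 32 = (sqrt t ^ 2) ^ 16" by (simp add: power_mult[symmetric])
    thus ?thesis using t0 by simp
  qed
  have key: "t^16 \<le> (if x < 48 then x / (3 + 3 * x)
                        else max (x / (3 + 3 * x)) ((1 - 4 * sqrt 3 * x powr (-1/2)) ^ 2))"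
  proof (cases "s \<le> 27")
    case True
    have tle: "t \<le> 13/14" unfolding t_def using s1 True by (simp add: field_simps)
    have "t^15 \<le> (13/14)^15" using t0 tle by (intro power_mono) auto
    moreover have "(1+t)^2 \<le> (27/14)^2" using t0 tle by (intro power_mono) auto
    ultimately have "3 * t^15 * (1+t)^2 \<le> 3 * (13/14)^15 * (27/14)^2"
      using t0 by (intro mult_mono) auto
    also have "\<dots> \<le> (4::real)" by (simp add: power_divide)
    finally have h: "3 * t^15 * (1+t)^2 \<le> 4" .
    have "t^16 = t * t^15" by (simp add: power_Suc[symmetric] del: power_Suc)
    also have "\<dots> \<le> t * (4 / (3 * (1+t)^2))"
      using h t0 by (intro mult_left_mono) (auto simp: field_simps)
    also have "t * (4 / (3 * (1+t)^2)) = x / (3 + 3 * x)"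
      proof -
        have xe: "x = s*s - 1" using s2 by (simp add: power2_eq_square)
        have e1: "x / (3 + 3 * x) = (s*s - 1) / (3*s*s)" unfolding xe by (simp add: algebra_simps)
        have e2: "1 + t = 2*s/(s+1)" unfolding t_def using s1 by (simp add: field_simps)
        have e3: "t * (4 / (3 * (1+t)^2)) = (s*s - 1) / (3*s*s)"
        proof -
          have "s+1 \<noteq> 0" "s \<noteq> 0" using s1 by auto
          then show ?thesis unfolding e2 unfolding t_def
            apply (simp add: divide_simps power2_eq_square) by (simp add: algebra_simps)
        qed
        show ?thesis using e1 e3 by simp
      qed
    finally have A: "t^16 \<le> x / (3 + 3 * x)" .
    show ?thesis using A by auto
  next
    case False
    have ss: "27 * s \<le> s * s" using False by (intro mult_right_mono) auto
    have xe: "x = s*s - 1" using s2 by (simp add: power2_eq_square)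
    have x48: "\<not> x < 48" using ss False xe by linarith
    define u where "u = 2 / (s + 1)"
    have u0: "0 \<le> u" "u \<le> 1" unfolding u_def using s1 by auto
    have tu: "t = 1 - u" using teq u_def by simp
    have b: "t^8 * (1 + 8*u) \<le> 1" using bern8[OF u0] tu by simp
    have e: "(1 + 8*u) * (s+1) = s+17" unfolding u_def using s1 by (simp add: field_simps)
    have "t^8 * (s+17) = (t^8 * (1 + 8*u)) * (s+1)" using e by (simp add: mult.assoc)
    also have "\<dots> \<le> 1 * (s+1)" using b s1 by (intro mult_right_mono) auto
    finally have "t^8 * (s+17) \<le> s+1" by simp
    hence t8: "t^8 \<le> (s+1)/(s+17)" using s1 by (subst pos_le_divide_eq) auto
    have sq: "x powr (-1/2) = 1 / sqrt x"
    proof -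
      have "x powr (-1/2) = x powr (-(1/2))" by simp
      also have "\<dots> = 1 / x powr (1/2)" by (rule powr_minus_divide)
      also have "\<dots> = 1 / sqrt x" using xpos by (simp add: powr_half_sqrt)
      finally show ?thesis .
    qed
    have "sqrt 48 * (s+17) \<le> 16 * sqrt x"
    proof -
      have "sqrt 48 * (s+17) = sqrt (48 * (s+17)^2)" using s1 by (simp add: real_sqrt_mult)
      also have "\<dots> \<le> sqrt (256 * x)" 
      proof (intro real_sqrt_le_mono)
        have "(s+17)^2 = s*s + 34*s + 289" by (simp add: power2_eq_square algebra_simps)
        then show "48 * (s+17)^2 \<le> 256 * x" using ss False xe by linarith
      qed
      also have "\<dots> = 16 * sqrt x" by (simp add: real_sqrt_mult)
      finally show ?thesis .
    qed
    moreover have "sqrt 48 = 4 * sqrt 3"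
      using real_sqrt_mult[of 16 3] by simp
    ultimately have c: "4 * sqrt 3 * (s+17) \<le> 16 * sqrt x" by simp
    have sxp: "sqrt x > 0" using xpos by simp
    have "(s+1)/(s+17) = 1 - 16/(s+17)" using s1 by (simp add: field_simps)
    also have "\<dots> \<le> 1 - 4 * sqrt 3 / sqrt x"
      using c sxp s1 by (simp add: field_simps)
    finally have t8': "t^8 \<le> 1 - 4 * sqrt 3 * x powr (-1/2)" using t8 sq by simp
    have "t^16 = (t^8)^2" by (simp add: power_mult[symmetric])
    also have "\<dots> \<le> (1 - 4 * sqrt 3 * x powr (-1/2))^2"
      using t8' t0 by (intro power_mono) auto
    finally show ?thesis using x48 by auto
  qed
  show ?thesis unfolding Let_def x_def[symmetric] s_def[symmetric] teq rho using key .
qed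

end
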